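(* For every integer $n\ge 3$, $$M^L(n)\ \ge\ \frac{3\cdot 2^n}{3n-2}.$$
   Context: $\mathbb{F}=\{0,1\}$. The binary $n$-dimensional hypercube $\mathbb{F}^n$ is the graph on $\mathbb{F}^n$ where two words are adjacent iff their Hamming distance is $1$. For a nonempty $C\subseteq\mathbb{F}^n$, $I(\mathbf{x})=N[\mathbf{x}]\cap C$ with $N[\mathbf{x}]$ the words at Hamming distance $\le1$ from $\mathbf{x}$. $C$ is a local identifying code if $I(\mathbf{x})\ne\emptyset$ for all $\mathbf{x}$ and $I(\mathbf{x})\ne I(\mathbf{y})$ for all adjacent $\mathbf{x},\mathbf{y}$. $M^L(n)$ is the minimum cardinality of a local identifying code in $\mathbb{F}^n$. *)

theory Defs
  imports Complex_Main
begin

definition cube :: "nat \<Rightarrow> bool list set" where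
  "cube n = {xs. length xs = n}"

definition hamming :: "bool list \<Rightarrow> bool list \<Rightarrow> nat" where
  "hamming x y = card {i. i < length x \<and> x ! i \<noteq> y ! i}"

definition closed_nbhd :: "nat \<Rightarrow> bool list \<Rightarrow> bool list set" where
  "closed_nbhd n x = {y \<in> cube n. hamming x y \<le> 1}"

definition I_set :: "nat \<Rightarrow> bool list set \<Rightarrow> bool list \<Rightarrow> bool list set" where
  "I_set n C x = closed_nbhd n x \<inter> C"

definition local_identifying_code :: "nat \<Rightarrow> bool list set \<Rightarrow> bool" where
  "local_identifying_code n C \<longleftrightarrow>
     C \<subseteq> cube n \<and> C \<noteq> {} \<and>
     (\<forall>x \<in> cube n. I_set n C x \<noteq> {}) \<and>
     (\<forall>x \<in> cube n. \<forall>y \<in> cube n. hamming x y = 1 \<longrightarrow> I_set n C x \<noteq> I_set n C y)"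

definition M_L :: "nat \<Rightarrow> nat" where
  "M_L n = (LEAST k. \<exists>C. local_identifying_code n C \<and> card C = k)"

end

theory Submission imports Defs begin

definition flip :: "nat \<Rightarrow> bool list \<Rightarrow> bool list" where
  "flip i x = x[i := \<not> x ! i]"

lemma len_flip[simp]: "length (flip i x) = length x" by (simp add: flip_def)

lemma flip_nth: "i < length x \<Longrightarrow> flip i x ! k = (if k = i then \<not> x ! i else x ! k)"
  by (simp add: flip_def nth_list_update)

lemma ham0: assumes "length x = length y" shows "hamming x y = 0 \<longleftrightarrow> x = y"
proof -
  have fin: "finite {i. i < length x \<and> x ! i \<noteq> y ! i}" by simp
  have "hamming x y = 0 \<longleftrightarrow> {i. i < length x \<and> x ! i \<noteq> y ! i} = {}"
    unfolding hamming_def using fin by simp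
  also have "\<dots> \<longleftrightarrow> x = y" using assms by (auto simp: list_eq_iff_nth_eq)
  finally show ?thesis .
qed

lemma ham_flip: assumes "i < length x" shows "hamming x (flip i x) = 1"
proof -
  have "{k. k < length x \<and> x ! k \<noteq> flip i x ! k} = {i}"
    using assms by (auto simp: flip_nth)
  thus ?thesis by (simp add: hamming_def)
qed

lemma ham_flip2: assumes "i < length x" "j < length x" "i \<noteq> j"
  shows "hamming (flip i x) (flip j x) = 2"
proof -
  have "{k. k < length (flip i x) \<and> flip i x ! k \<noteq> flip j x ! k} = {i, j}"
    using assms by (auto simp: flip_nth)
  thus ?thesis using assms by (simp add: hamming_def)
qed

lemma ham_sym: "length x = length y \<Longrightarrow> hamming x y = hamming y x"
  unfolding hamming_def by metis

lemma ham1: assumes "length x = length y" "hamming x y = 1"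
  shows "\<exists>i<length x. y = flip i x"
proof -
  from assms(2) obtain i where i: "{k. k < length x \<and> x ! k \<noteq> y ! k} = {i}"
    unfolding hamming_def by (auto simp: card_1_singleton_iff)
  hence "i < length x" "x ! i \<noteq> y ! i" by auto
  moreover have "y = flip i x"
  proof (rule nth_equalityI)
    show "length y = length (flip i x)" using assms by simp
    fix k assume "k < length y"
    thus "y ! k = flip i x ! k" using i assms \<open>i < length x\<close>
      by (auto simp: flip_nth)
  qed
  ultimately show ?thesis by blast
qed

lemma flip_flip_same: "i < length x \<Longrightarrow> flip i (flip i x) = x"
  by (rule nth_equalityI) (auto simp: flip_nth)

lemma flip_comm: "i < length x \<Longrightarrow> j < length x \<Longrightarrow> flip i (flip j x) = flip j (flip i x)"
  by (rule nth_equalityI) (auto simp: flip_nth)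

lemma flip_neq: "i < length x \<Longrightarrow> flip i x \<noteq> x"
  by (metis ham0 ham_flip len_flip zero_neq_one)

lemma flip_inj: "i < length x \<Longrightarrow> j < length x \<Longrightarrow> flip i x = flip j x \<Longrightarrow> i = j"
  by (metis ham_flip2 ham0 len_flip zero_neq_numeral)

lemma nbhd_eq: assumes "c \<in> cube n"
  shows "closed_nbhd n c = insert c ((\<lambda>i. flip i c) ` {..<n})"
proof -
  have lc: "length c = n" using assms by (simp add: cube_def)
  show ?thesis
  proof (intro equalityI subsetI)
    fix y assume "y \<in> closed_nbhd n c"
    hence y: "length y = n" "hamming c y \<le> 1" by (auto simp: closed_nbhd_def cube_def)
    show "y \<in> insert c ((\<lambda>i. flip i c) ` {..<n})"
    proof (cases "hamming c y = 0")
      case True thus ?thesis using ham0 lc y by auto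
    next
      case False hence "hamming c y = 1" using y by auto
      then obtain i where "i < length c" "y = flip i c" using ham1 lc y by metis
      thus ?thesis using lc by auto
    qed
  next
    fix y assume "y \<in> insert c ((\<lambda>i. flip i c) ` {..<n})"
    thus "y \<in> closed_nbhd n c" using lc ham0[of c c] ham_flip[of _ c]
      by (auto simp: closed_nbhd_def cube_def)
  qed
qed

lemma card_nbhd: assumes "c \<in> cube n" shows "card (closed_nbhd n c) = Suc n"
proof -
  have lc: "length c = n" using assms by (simp add: cube_def)
  have "inj_on (\<lambda>i. flip i c) {..<n}" using flip_inj lc by (auto simp: inj_on_def)
  moreover have "c \<notin> (\<lambda>i. flip i c) ` {..<n}" using flip_neq lc by (metis imageE lessThan_iff)
  ultimately show ?thesis using nbhd_eq[OF assms] by (simp add: card_image)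
qed

lemma nb_sym: "x \<in> cube n \<Longrightarrow> y \<in> cube n \<Longrightarrow> y \<in> closed_nbhd n x \<longleftrightarrow> x \<in> closed_nbhd n y"
  by (simp add: closed_nbhd_def cube_def ham_sym)

lemma flip_cube: "x \<in> cube n \<Longrightarrow> flip i x \<in> cube n" by (simp add: cube_def)

lemma flip_nbhd: "x \<in> cube n \<Longrightarrow> i < n \<Longrightarrow> flip i x \<in> closed_nbhd n x"
  by (simp add: nbhd_eq)

lemma finite_cube: "finite (cube n)" and card_cube: "card (cube n) = 2 ^ n"
proof -
  have e: "cube n = {xs. set xs \<subseteq> (UNIV::bool set) \<and> length xs = n}" by (simp add: cube_def)
  show "finite (cube n)" unfolding e by (rule finite_lists_length_eq) simp
  show "card (cube n) = 2 ^ n" unfolding e by (subst card_lists_length_eq) simp_all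
qed

lemma sum_swap_count:
  assumes CQ: "C \<subseteq> cube n"
  shows "(\<Sum>x\<in>cube n. card (I_set n C x) * g x) = (\<Sum>c\<in>C. \<Sum>x\<in>closed_nbhd n c. g x)"
proof -
  have finC: "finite C" using CQ finite_cube finite_subset by blast
  have "(\<Sum>x\<in>cube n. card (I_set n C x) * g x)
      = (\<Sum>x\<in>cube n. \<Sum>c\<in>C. if c \<in> closed_nbhd n x then g x else 0)"
  proof (rule sum.cong[OF refl])
    fix x assume "x \<in> cube n"
    have "card (I_set n C x) * g x = (\<Sum>c\<in>C \<inter> closed_nbhd n x. g x)"
      by (simp add: I_set_def Int_commute)
    also have "\<dots> = (\<Sum>c\<in>C. if c \<in> closed_nbhd n x then g x else 0)"
      by (rule sum.inter_restrict[OF finC])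
    finally show "card (I_set n C x) * g x = (\<Sum>c\<in>C. if c \<in> closed_nbhd n x then g x else 0)" .
  qed
  also have "\<dots> = (\<Sum>c\<in>C. \<Sum>x\<in>cube n. if c \<in> closed_nbhd n x then g x else 0)"
    by (rule sum.swap)
  also have "\<dots> = (\<Sum>c\<in>C. \<Sum>x\<in>closed_nbhd n c. g x)"
  proof (rule sum.cong[OF refl])
    fix c assume c: "c \<in> C"
    have "(\<Sum>x\<in>cube n. if c \<in> closed_nbhd n x then g x else 0)
        = (\<Sum>x\<in>cube n \<inter> {x. c \<in> closed_nbhd n x}. g x)"
      using sum.inter_restrict[OF finite_cube, of g n "{x. c \<in> closed_nbhd n x}"] by simp
    also have "cube n \<inter> {x. c \<in> closed_nbhd n x} = closed_nbhd n c"
      using c CQ nb_sym[of _ n c] by (auto simp: closed_nbhd_def)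
    finally show "(\<Sum>x\<in>cube n. if c \<in> closed_nbhd n x then g x else 0) = (\<Sum>x\<in>closed_nbhd n c. g x)" .
  qed
  finally show ?thesis .
qed

definition hh :: "nat \<Rightarrow> bool list set \<Rightarrow> bool list \<Rightarrow> nat" where
  "hh n C x = (if card (I_set n C x) = 1 then 4 else if card (I_set n C x) = 2 then 1 else 0)"

lemma hh_le4: "hh n C x \<le> 4" by (simp add: hh_def)

lemma card2: "finite A \<Longrightarrow> a \<in> A \<Longrightarrow> b \<in> A \<Longrightarrow> a \<noteq> b \<Longrightarrow> 2 \<le> card A"
proof -
  assume "finite A" "a \<in> A" "b \<in> A" "a \<noteq> b"
  hence "card {a,b} \<le> card A" by (intro card_mono) auto
  thus ?thesis using \<open>a \<noteq> b\<close> by simp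
qed

lemma card3: "finite A \<Longrightarrow> a \<in> A \<Longrightarrow> b \<in> A \<Longrightarrow> d \<in> A \<Longrightarrow> a \<noteq> b \<Longrightarrow> a \<noteq> d \<Longrightarrow> b \<noteq> d \<Longrightarrow> 3 \<le> card A"
proof -
  assume "finite A" "a \<in> A" "b \<in> A" "d \<in> A" "a \<noteq> b" "a \<noteq> d" "b \<noteq> d"
  hence "card {a,b,d} \<le> card A" by (intro card_mono) auto
  thus ?thesis using \<open>a \<noteq> b\<close> \<open>a \<noteq> d\<close> \<open>b \<noteq> d\<close> by simp
qed

lemma sum_two:
  assumes "finite S" "a \<in> S" "b \<in> S" "a \<noteq> b" "\<And>x. x \<in> S \<Longrightarrow> f x \<le> (4::nat)"
  shows "sum f S \<le> f a + f b + 4 * (card S - 2)"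
proof -
  have "sum f S = f a + f b + sum f (S - {a,b})"
    using assms by (simp add: sum.remove[of S a] sum.remove[of "S - {a}" b] insert_Diff_if Diff_insert2 [symmetric])
  also have "sum f (S - {a,b}) \<le> 4 * card (S - {a,b})"
    using sum_bounded_above[of "S - {a,b}" f 4] assms by simp
  also have "card (S - {a,b}) = card S - 2" using assms by (simp add: card_Diff_subset)
  finally show ?thesis by simp
qed

lemma selfN: "x \<in> cube n \<Longrightarrow> x \<in> closed_nbhd n x"
  by (simp add: nbhd_eq)

lemma two_elems: assumes "finite A" "2 \<le> card A" obtains a b where "a \<in> A" "b \<in> A" "a \<noteq> b"
proof -
  from assms have "A \<noteq> {}" by auto
  then obtain a where a: "a \<in> A" by auto
  have "A - {a} \<noteq> {}"
  proof
    assume "A - {a} = {}"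
    hence "A \<subseteq> {a}" by auto
    hence "card A \<le> 1" using card_mono[of "{a}" A] by simp
    thus False using assms by simp
  qed
  then obtain b where "b \<in> A" "b \<noteq> a" by auto
  thus ?thesis using a that by blast
qed

lemma per_cw:
  assumes L: "local_identifying_code n C" and c: "c \<in> C" and n3: "n \<ge> 3"
  shows "(\<Sum>x\<in>closed_nbhd n c. hh n C x) \<le> max (n+4) (4*n-6)"
proof -
  have CQ: "C \<subseteq> cube n"
    and sep: "\<forall>x\<in>cube n. \<forall>y\<in>cube n. hamming x y = 1 \<longrightarrow> I_set n C x \<noteq> I_set n C y"
    using L unfolding local_identifying_code_def by auto
  have finC: "finite C" using CQ finite_cube finite_subset by blast
  have cQ: "c \<in> cube n" using c CQ by auto
  have lc: "length c = n" using cQ by (simp add: cube_def)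
  have finI: "\<And>x. finite (I_set n C x)" using finC by (simp add: I_set_def)
  define S where "S = (\<lambda>i. flip i c) ` {..<n}"
  have N: "closed_nbhd n c = insert c S" using nbhd_eq[OF cQ] by (simp add: S_def)
  have cS: "c \<notin> S" using flip_neq lc unfolding S_def by (metis imageE lessThan_iff)
  have finS: "finite S" by (simp add: S_def)
  have "inj_on (\<lambda>i. flip i c) {..<n}" using flip_inj lc by (auto simp: inj_on_def)
  hence cardS: "card S = n" by (simp add: S_def card_image)
  have sumN: "(\<Sum>x\<in>closed_nbhd n c. hh n C x) = hh n C c + sum (hh n C) S"
    using N cS finS by simp
  have SQ: "S \<subseteq> cube n" using flip_cube[OF cQ] by (auto simp: S_def)
  have inI: "\<And>y. y \<in> insert c S \<Longrightarrow> c \<in> I_set n C y"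
  proof -
    fix y assume y: "y \<in> insert c S"
    hence "y \<in> closed_nbhd n c" "y \<in> cube n" using N SQ cQ by auto
    thus "c \<in> I_set n C y" using nb_sym[OF cQ] c by (simp add: I_set_def)
  qed
  have ISc: "\<And>y. y \<in> S \<Longrightarrow> I_set n C y \<noteq> I_set n C c"
  proof -
    fix y assume "y \<in> S"
    then obtain i where i: "i < n" "y = flip i c" by (auto simp: S_def)
    hence "hamming c y = 1" using ham_flip lc by simp
    thus "I_set n C y \<noteq> I_set n C c" using sep cQ SQ \<open>y \<in> S\<close> by auto
  qed
  have cIc: "c \<in> I_set n C c" using inI by simp
  have hh1: "\<And>y a b. a \<in> I_set n C y \<Longrightarrow> b \<in> I_set n C y \<Longrightarrow> a \<noteq> b \<Longrightarrow> hh n C y \<le> 1"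
  proof -
    fix y a b assume "a \<in> I_set n C y" "b \<in> I_set n C y" "a \<noteq> b"
    hence "2 \<le> card (I_set n C y)" by (rule card2[OF finI])
    thus "hh n C y \<le> 1" by (simp add: hh_def)
  qed
  have hh0: "\<And>y a b d. a \<in> I_set n C y \<Longrightarrow> b \<in> I_set n C y \<Longrightarrow> d \<in> I_set n C y \<Longrightarrow>
      a \<noteq> b \<Longrightarrow> a \<noteq> d \<Longrightarrow> b \<noteq> d \<Longrightarrow> hh n C y = 0"
  proof -
    fix y a b d assume A: "a \<in> I_set n C y" "b \<in> I_set n C y" "d \<in> I_set n C y"
      "a \<noteq> b" "a \<noteq> d" "b \<noteq> d"
    have "3 \<le> card (I_set n C y)" by (rule card3[OF finI A])
    thus "hh n C y = 0" by (simp add: hh_def)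
  qed
  have "I_set n C c \<noteq> {}" using cIc by blast
  hence k1: "card (I_set n C c) \<ge> 1" using finI[of c] by (simp add: Suc_le_eq card_gt_0_iff)
  consider (one) "card (I_set n C c) = 1" | (two) "card (I_set n C c) = 2" | (three) "card (I_set n C c) \<ge> 3"
    using k1 by linarith
  thus ?thesis
  proof cases
    case one
    have hc: "hh n C c = 4" using one by (simp add: hh_def)
    have Ic: "I_set n C c = {c}" using one cIc by (metis card_1_singletonE singletonD)
    have "\<And>y. y \<in> S \<Longrightarrow> hh n C y \<le> 1"
    proof -
      fix y assume y: "y \<in> S"
      have cy: "c \<in> I_set n C y" using inI y by simp
      have "I_set n C y \<noteq> {c}" using ISc[OF y] Ic by simp
      then obtain b where "b \<in> I_set n C y" "b \<noteq> c" using cy by blast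
      thus "hh n C y \<le> 1" using hh1 cy by blast
    qed
    hence "sum (hh n C) S \<le> card S * 1" using sum_bounded_above[of S "hh n C" 1] by simp
    thus ?thesis using sumN hc cardS by simp
  next
    case two
    have hc: "hh n C c = 1" using two by (simp add: hh_def)
    have "card (I_set n C c - {c}) = 1" using two cIc finI by (simp add: card_Diff_singleton)
    then obtain z where zz: "I_set n C c - {c} = {z}" by (metis card_1_singletonE)
    hence Ic: "I_set n C c = {c, z}" and zc: "z \<noteq> c" using cIc by auto
    have zC: "z \<in> C" and zN: "z \<in> closed_nbhd n c" using Ic by (auto simp: I_set_def)
    hence zS: "z \<in> S" using N zc by auto
    then obtain i where i: "i < n" "z = flip i c" by (auto simp: S_def)
    have zQ: "z \<in> cube n" using zS SQ by auto
    have cIz: "c \<in> I_set n C z" using inI zS by simp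
    have zIz: "z \<in> I_set n C z" using selfN[OF zQ] zC by (simp add: I_set_def)
    have "I_set n C z \<noteq> {c, z}" using ISc[OF zS] Ic by simp
    then obtain c' where c'I: "c' \<in> I_set n C z" and c'c: "c' \<noteq> c" and c'z: "c' \<noteq> z"
      using cIz zIz by blast
    have "c' \<in> closed_nbhd n z" and c'C: "c' \<in> C" using c'I by (auto simp: I_set_def)
    then obtain j where j: "j < n" "c' = flip j z" using nbhd_eq[OF zQ] c'z by auto
    have ji: "j \<noteq> i"
    proof
      assume "j = i"
      hence "c' = c" using j i flip_flip_same[of i c] lc by simp
      thus False using c'c by simp
    qed
    define w where "w = flip j c"
    have wS: "w \<in> S" using j by (simp add: S_def w_def)
    have wz: "w \<noteq> z"
    proof
      assume "w = z"
      hence "flip j c = flip i c" using i by (simp add: w_def)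
      thus False using flip_inj[of j c i] j i lc ji by simp
    qed
    have wc: "w \<noteq> c" using wS cS by auto
    have wC: "w \<notin> C"
    proof
      assume "w \<in> C"
      hence "w \<in> I_set n C c" using wS N by (simp add: I_set_def)
      thus False using Ic wz wc by auto
    qed
    have wQ: "w \<in> cube n" using wS SQ by auto
    have "c' = flip i w" using j i flip_comm[of i c j] lc by (simp add: w_def)
    hence "c' \<in> closed_nbhd n w" using flip_nbhd[OF wQ i(1)] by simp
    hence c'Iw: "c' \<in> I_set n C w" using c'C by (simp add: I_set_def)
    have cIw: "c \<in> I_set n C w" using inI wS by simp
    have hw: "hh n C w \<le> 1" using hh1[OF c'Iw cIw c'c] .
    have hz: "hh n C z = 0" using hh0[OF cIz zIz c'I zc[symmetric] c'c[symmetric] c'z[symmetric]] .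
    have "sum (hh n C) S \<le> hh n C z + hh n C w + 4 * (card S - 2)"
      using sum_two[OF finS zS wS wz[symmetric] hh_le4] .
    thus ?thesis using sumN hc hw hz cardS n3 by simp
  next
    case three
    have hc: "hh n C c = 0" using three by (simp add: hh_def)
    have "2 \<le> card (I_set n C c - {c})" using three cIc finI by (simp add: card_Diff_singleton)
    then obtain a b where ab: "a \<in> I_set n C c - {c}" "b \<in> I_set n C c - {c}" "a \<noteq> b"
      using two_elems finI by (metis finite_Diff)
    have aS: "a \<in> S" and bS: "b \<in> S" using ab N by (auto simp: I_set_def)
    have aC: "a \<in> C" and bC: "b \<in> C" using ab by (auto simp: I_set_def)
    have aQ: "a \<in> cube n" and bQ: "b \<in> cube n" using aS bS SQ by auto
    have "a \<in> I_set n C a" using selfN[OF aQ] aC by (simp add: I_set_def)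
    moreover have "c \<in> I_set n C a" using inI aS by simp
    moreover have "a \<noteq> c" using aS cS by auto
    ultimately have ha: "hh n C a \<le> 1" using hh1 by blast
    have "b \<in> I_set n C b" using selfN[OF bQ] bC by (simp add: I_set_def)
    moreover have "c \<in> I_set n C b" using inI bS by simp
    moreover have "b \<noteq> c" using bS cS by auto
    ultimately have hb: "hh n C b \<le> 1" using hh1 by blast
    have "sum (hh n C) S \<le> hh n C a + hh n C b + 4 * (card S - 2)"
      using sum_two[OF finS aS bS ab(3) hh_le4] .
    thus ?thesis using sumN hc ha hb cardS n3 by simp
  qed
qed

lemma main_bound:
  assumes L: "local_identifying_code n C" and n3: "n \<ge> 3"
  shows "3 * 2 ^ n \<le> (3 * n - 2) * card C"
proof -
  have CQ: "C \<subseteq> cube n" and ne: "\<forall>x\<in>cube n. I_set n C x \<noteq> {}"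
    using L unfolding local_identifying_code_def by auto
  have finC: "finite C" using CQ finite_cube finite_subset by blast
  have finI: "\<And>x. finite (I_set n C x)" using finC by (simp add: I_set_def)
  define B where "B = max (n+4) (4*n-6)"
  have "6 * 2 ^ n = (\<Sum>x\<in>cube n. (6::nat))" by (simp add: card_cube)
  also have "\<dots> \<le> (\<Sum>x\<in>cube n. card (I_set n C x) * 2 + card (I_set n C x) * hh n C x)"
  proof (rule sum_mono)
    fix x assume x: "x \<in> cube n"
    have "card (I_set n C x) \<ge> 1" using ne x finI[of x] by (simp add: Suc_le_eq card_gt_0_iff)
    then consider "card (I_set n C x) = 1" | "card (I_set n C x) = 2" | "card (I_set n C x) \<ge> 3"
      by linarith
    thus "6 \<le> card (I_set n C x) * 2 + card (I_set n C x) * hh n C x"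
      by cases (auto simp: hh_def)
  qed
  also have "\<dots> = (\<Sum>x\<in>cube n. card (I_set n C x) * 2) + (\<Sum>x\<in>cube n. card (I_set n C x) * hh n C x)"
    by (rule sum.distrib)
  also have "\<dots> = (\<Sum>c\<in>C. \<Sum>x\<in>closed_nbhd n c. 2) + (\<Sum>c\<in>C. \<Sum>x\<in>closed_nbhd n c. hh n C x)"
    using sum_swap_count[OF CQ, of "\<lambda>_. 2"] sum_swap_count[OF CQ, of "hh n C"] by simp
  also have "(\<Sum>c\<in>C. \<Sum>x\<in>closed_nbhd n c. (2::nat)) = card C * (2 * Suc n)"
    using card_nbhd CQ by (simp add: subset_iff)
  also have "(\<Sum>c\<in>C. \<Sum>x\<in>closed_nbhd n c. hh n C x) \<le> card C * B"
    using sum_bounded_above[of C "\<lambda>c. \<Sum>x\<in>closed_nbhd n c. hh n C x" B] per_cw[OF L _ n3]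
    by (simp add: B_def mult.commute)
  finally have key: "6 * 2 ^ n \<le> card C * (2 * Suc n) + card C * B" by simp
  show ?thesis
  proof (cases "n = 3")
    case True
    hence "48 \<le> card C * 15" using key by (simp add: B_def)
    hence "4 \<le> card C" by linarith
    thus ?thesis using True by simp
  next
    case False
    hence "B = 4 * n - 6" using n3 by (simp add: B_def)
    hence "card C * (2 * Suc n) + card C * B = 2 * ((3 * n - 2) * card C)"
      using n3 by (simp add: algebra_simps diff_mult_distrib diff_mult_distrib2)
    thus ?thesis using key by (simp add: mult.commute)
  qed
qed

lemma cube_code: assumes "n \<ge> 3" shows "local_identifying_code n (cube n)"
proof -
  have I: "\<And>x. I_set n (cube n) x = closed_nbhd n x" by (auto simp: I_set_def closed_nbhd_def)
  have "replicate n True \<in> cube n" by (simp add: cube_def)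
  hence ne: "cube n \<noteq> {}" by auto
  have sep: "\<forall>x\<in>cube n. \<forall>y\<in>cube n. hamming x y = 1 \<longrightarrow> closed_nbhd n x \<noteq> closed_nbhd n y"
  proof (intro ballI impI)
    fix x y assume x: "x \<in> cube n" and y: "y \<in> cube n" and h: "hamming x y = 1"
    have lx: "length x = n" and ly: "length y = n" using x y by (auto simp: cube_def)
    obtain i where i: "i < n" "y = flip i x" using ham1[OF _ h] lx ly by auto
    define j where "j = (if i = 0 then 1 else 0::nat)"
    have j: "j < n" "j \<noteq> i" using assms by (auto simp: j_def)
    have "flip j x \<in> closed_nbhd n x" using flip_nbhd[OF x j(1)] .
    moreover have "hamming y (flip j x) = 2" using ham_flip2[of i x j] i j lx by simp
    hence "flip j x \<notin> closed_nbhd n y" by (simp add: closed_nbhd_def)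
    ultimately show "closed_nbhd n x \<noteq> closed_nbhd n y" by blast
  qed
  show ?thesis unfolding local_identifying_code_def I
    using ne sep selfN by blast
qed

theorem mainTheorem5:
  fixes n :: nat
  assumes "n \<ge> 3"
  shows "real (M_L n) \<ge> 3 * 2 ^ n / (3 * real n - 2)"
proof -
  have "\<exists>k C. local_identifying_code n C \<and> card C = k" using cube_code[OF assms] by blast
  hence "\<exists>C. local_identifying_code n C \<and> card C = M_L n"
    unfolding M_L_def by (rule LeastI_ex)
  then obtain C where L: "local_identifying_code n C" and cC: "card C = M_L n" by blast
  have nat: "3 * 2 ^ n \<le> (3 * n - 2) * M_L n" using main_bound[OF L assms] cC by simp
  hence "real (3 * 2 ^ n) \<le> real ((3 * n - 2) * M_L n)" by (simp only: of_nat_le_iff)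
  hence r: "3 * 2 ^ n \<le> (3 * real n - 2) * real (M_L n)" using assms by (simp add: of_nat_diff)
  have pos: "3 * real n - 2 > 0" using assms by simp
  show ?thesis using r pos by (simp add: divide_le_eq mult.commute)
qed

end
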